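(* $h:=\int_{\Sigma\times\mathbb{R}\times[0,1)}g(\mathbf{j},y,x)\,d\mu(\mathbf{j},y,x)<\infty$.
   Context: $b\ge2$ integer, $\gamma\in(0,1)$, $\phi$ a $\mathbb{Z}$-periodic Lipschitz function. $\Lambda=\{0,\dots,b-1\}$, $\Sigma=\Lambda^{\mathbb{Z}_+}$, $\nu$ uniform on $\Lambda$. $S(x,\mathbf{j})=\sum_{n\ge1}\gamma^{n-1}\phi\big(\frac{x+j_1+j_2b+\cdots+j_nb^{n-1}}{b^n}\big)$. $\mu$ is the image of $\nu^{\mathbb{Z}_+}\times$Lebesgue (on $[0,1)$) under $\Pi(\mathbf{j},x)=(\mathbf{j},S(x,\mathbf{j}),x)$, a probability on $\Sigma\times\mathbb{R}\times[0,1)$. Let $\{\mu_{(\mathbf{j},y,x)}\}$ be the (Rokhlin) system of conditional measures of $\mu$ with respect to the measurable partition $\zeta=\{\Sigma\times\{y\}\times\{x\}:y\in\mathbb{R},x\in[0,1)\}$. Define $g(\mathbf{j},y,x)=-\log\mu_{(\mathbf{j},y,x)}\big([j_1]\times\mathbb{R}\times[0,1)\big)$, where $[j_1]$ is the cylinder of sequences with first symbol $j_1$. *)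

theory Defs
  imports "HOL-Probability.Probability"
begin

text \<open>A sequence (j_1, j_2, ...) is represented
  by j :: nat => nat with j_n = j (n - 1), i.e. j 0 is the first symbol j_1.\<close>
definition Sigma_meas :: "nat \<Rightarrow> (nat \<Rightarrow> nat) measure" where
  "Sigma_meas b = (\<Pi>\<^sub>M i\<in>(UNIV::nat set). uniform_count_measure {..<b})"

text \<open>S(x,j) = sum_{n>=1} gamma^(n-1) phi((x + j_1 + j_2 b + ... + j_n b^(n-1)) / b^n),
  written with 0-based indices.\<close>
definition S_fun :: "nat \<Rightarrow> real \<Rightarrow> (real \<Rightarrow> real) \<Rightarrow> real \<Rightarrow> (nat \<Rightarrow> nat) \<Rightarrow> real" where
  "S_fun b \<gamma> \<phi> x j =
     (\<Sum>n. \<gamma> ^ n * \<phi> ((x + (\<Sum>k<Suc n. real (j k) * real b ^ k)) / real b ^ Suc n))"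

definition base_meas :: "nat \<Rightarrow> ((nat \<Rightarrow> nat) \<times> real) measure" where
  "base_meas b = Sigma_meas b \<Otimes>\<^sub>M restrict_space lborel {0..<1::real}"

definition target_space :: "nat \<Rightarrow> ((nat \<Rightarrow> nat) \<times> real \<times> real) measure" where
  "target_space b = Sigma_meas b \<Otimes>\<^sub>M (borel \<Otimes>\<^sub>M restrict_space borel {0..<1::real})"

definition mu_meas :: "nat \<Rightarrow> real \<Rightarrow> (real \<Rightarrow> real) \<Rightarrow> ((nat \<Rightarrow> nat) \<times> real \<times> real) measure" where
  "mu_meas b \<gamma> \<phi> = distr (base_meas b) (target_space b) (\<lambda>(j, x). (j, S_fun b \<gamma> \<phi> x j, x))"

text \<open>Rokhlin system of conditional measures of M with respect to the measurable
  partition whose elements are the fibres {w. snd w = c} (here: Sigma x {y} x {x}).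
  K w is the conditional measure on the partition element containing w; it depends
  only on that element, is (for a.e. w) a probability measure on M's sigma-algebra
  concentrated on that element, w |-> K w A is measurable (w.r.t. the completion,
  as in Rokhlin's theory of Lebesgue spaces), and M(A) = int K w (A) dM(w).\<close>
definition cond_measure_system :: "('a \<times> 'b) measure \<Rightarrow> ('a \<times> 'b \<Rightarrow> ('a \<times> 'b) measure) \<Rightarrow> bool" where
  "cond_measure_system M K \<longleftrightarrow>
     (\<forall>w w'. snd w = snd w' \<longrightarrow> K w = K w') \<and>
     (AE w in M. prob_space (K w) \<and> sets (K w) = sets M \<and>
        emeasure (K w) {w' \<in> space M. snd w' = snd w} = 1) \<and>
     (\<forall>A \<in> sets M. (\<lambda>w. emeasure (K w) A) \<in> borel_measurable (completion M) \<and>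
        emeasure M A = (\<integral>\<^sup>+ w. emeasure (K w) A \<partial>completion M))"

definition neglog :: "real \<Rightarrow> ennreal" where
  "neglog p = (if p \<le> 0 then \<infinity> else ennreal (- ln p))"

definition g_fun :: "nat \<Rightarrow> ((nat \<Rightarrow> nat) \<times> real \<times> real \<Rightarrow> ((nat \<Rightarrow> nat) \<times> real \<times> real) measure)
     \<Rightarrow> (nat \<Rightarrow> nat) \<times> real \<times> real \<Rightarrow> ennreal" where
  "g_fun b K w = neglog (measure (K w) {w' \<in> space (target_space b). fst w' 0 = fst w 0})"

end

theory Submission
  imports Defs
begin


lemma set_lemma:
  fixes M :: "('a \<times> 'b) measure"
  assumes cms: "cond_measure_system M K"
    and A: "A \<in> sets M" and B: "B \<in> sets (completion M)" and Bsp: "B \<subseteq> space M"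
    and sat: "\<And>w w'. w \<in> B \<Longrightarrow> w' \<in> space M \<Longrightarrow> snd w' = snd w \<Longrightarrow> w' \<in> B"
  shows "emeasure (completion M) (A \<inter> B) = (\<integral>\<^sup>+ w. indicator B w * emeasure (K w) A \<partial>completion M)"
proof -
  obtain S N N' where BS: "B = S \<union> N" and NN: "N \<subseteq> N'" and N': "N' \<in> null_sets M" and S: "S \<in> sets M"
    using B by (rule sets_completionE)
  have AS: "A \<inter> S \<in> sets M" using A S by auto
  have "emeasure (completion M) (A \<inter> B) = emeasure (completion M) (A \<inter> S)"
  proof (rule emeasure_eq_AE)
    have "AE x in completion M. x \<notin> N'"
      using N' by (intro AE_not_in null_sets_completionI)
    then show "AE x in completion M. (x \<in> A \<inter> B) = (x \<in> A \<inter> S)"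
      by eventually_elim (use BS NN in auto)
    show "A \<inter> B \<in> sets (completion M)" using A B by auto
    show "A \<inter> S \<in> sets (completion M)" using AS by auto
  qed
  also have "\<dots> = emeasure M (A \<inter> S)" using AS by simp
  also have "\<dots> = (\<integral>\<^sup>+ w. emeasure (K w) (A \<inter> S) \<partial>completion M)"
    using cms AS unfolding cond_measure_system_def by blast
  also have "\<dots> = (\<integral>\<^sup>+ w. indicator B w * emeasure (K w) A \<partial>completion M)"
  proof (rule nn_integral_cong_AE)
    have N'sets: "N' \<in> sets M" using N' by auto
    have "(\<integral>\<^sup>+ w. emeasure (K w) N' \<partial>completion M) = emeasure M N'"
      using cms N'sets unfolding cond_measure_system_def by auto
    also have "\<dots> = 0" using N' by auto
    finally have I0: "(\<integral>\<^sup>+ w. emeasure (K w) N' \<partial>completion M) = 0" .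
    have mN: "(\<lambda>w. emeasure (K w) N') \<in> borel_measurable (completion M)"
      using cms N'sets unfolding cond_measure_system_def by blast
    have "AE w in completion M. emeasure (K w) N' = 0"
      using nn_integral_0_iff_AE[OF mN] I0 by blast
    moreover have "AE w in completion M. prob_space (K w) \<and> sets (K w) = sets M \<and>
        emeasure (K w) {w' \<in> space M. snd w' = snd w} = 1"
      using cms unfolding cond_measure_system_def by (intro AE_completion) auto
    moreover have "AE w in completion M. w \<in> space M" using AE_space by force
    ultimately show "AE w in completion M. emeasure (K w) (A \<inter> S) = indicator B w * emeasure (K w) A"
    proof eventually_elim
      case (elim w)
      note Wf = elim
      define F where "F = {w' \<in> space M. snd w' = snd w}"
      interpret P: prob_space "K w" using elim by auto
      have sK: "sets (K w) = sets M" using elim by auto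
      have spK: "space (K w) = space M" using sets_eq_imp_space_eq[OF sK] .
      have F1: "emeasure (K w) F = 1" using elim by (simp add: F_def)
      have Fs: "F \<in> sets (K w)"
        using F1 emeasure_notin_sets by fastforce
      have "P.prob F = 1" using F1 by (simp add: measure_def)
      then have AEF: "AE w' in K w. w' \<in> F" using P.AE_in_set_eq_1[OF Fs] by simp
      have "N' \<in> null_sets (K w)" using elim N' sK by (auto simp: null_sets_def)
      then have AEN: "AE w' in K w. w' \<notin> N'" by (rule AE_not_in)
      have AsK: "A \<in> sets (K w)" "A \<inter> S \<in> sets (K w)" using A AS sK by auto
      show ?case
      proof (cases "w \<in> B")
        case True
        have "emeasure (K w) (A \<inter> S) = emeasure (K w) A"
        proof (rule emeasure_eq_AE)
          show "AE x in K w. (x \<in> A \<inter> S) = (x \<in> A)"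
            using AEF AEN proof eventually_elim
            case (elim x)
            then have "x \<in> B" using sat[OF True, of x] by (auto simp: F_def)
            then show ?case using elim BS NN by auto
          qed
        qed (use AsK in auto)
        then show ?thesis using True by simp
      next
        case False
        have "emeasure (K w) (A \<inter> S) = emeasure (K w) {}"
        proof (rule emeasure_eq_AE)
          show "AE x in K w. (x \<in> A \<inter> S) = (x \<in> {})"
            using AEF proof eventually_elim
            case (elim x)
            show ?case
            proof
              assume "x \<in> A \<inter> S"
              then have "x \<in> B" using BS by auto
              moreover have "x \<in> space M" "snd w = snd x" using elim by (auto simp: F_def)
              ultimately have "w \<in> B" using sat[of x w] Wf by auto
              then show "x \<in> {}" using False by simp
            qed simp
          qed
        qed (use AsK in auto)
        then show ?thesis using False by simp
      qed
    qed
  qed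
  finally show ?thesis .
qed



lemma partial_le:
  fixes q :: real
  assumes "\<And>k. k \<le> m \<Longrightarrow> q \<le> (1/2)^k"
  shows "ennreal (real (Suc m)) \<le> (\<Sum>k. indicator {x. x \<le> (1/2::real)^k} q :: ennreal)"
proof -
  have "(\<Sum>k<Suc m. indicator {x. x \<le> (1/2::real)^k} q :: ennreal) = (\<Sum>k<Suc m. 1)"
    using assms by (intro sum.cong) (auto simp: indicator_def)
  also have "\<dots> = ennreal (real (Suc m))" by (simp add: ennreal_of_nat_eq_real_of_nat)
  finally have "ennreal (real (Suc m)) = (\<Sum>k<Suc m. indicator {x. x \<le> (1/2::real)^k} q :: ennreal)" by simp
  also have "\<dots> \<le> (\<Sum>k. indicator {x. x \<le> (1/2::real)^k} q :: ennreal)"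
    by (intro sum_le_suminf) auto
  finally show ?thesis .
qed

lemma neglog_bound:
  fixes q :: real
  assumes "0 \<le> q"
  shows "neglog q \<le> (\<Sum>k. indicator {x. x \<le> (1/2::real)^k} q :: ennreal)"
proof (cases "q = 0")
  case True
  have Pm: "ennreal (real (Suc m)) \<le> (\<Sum>k. indicator {x. x \<le> (1/2::real)^k} q :: ennreal)" for m
    by (rule partial_le) (simp add: True)
  have "(\<Sum>k. indicator {x. x \<le> (1/2::real)^k} q :: ennreal) = \<infinity>"
  proof (rule ccontr)
    assume "(\<Sum>k. indicator {x. x \<le> (1/2::real)^k} q :: ennreal) \<noteq> \<infinity>"
    then obtain r where r: "(\<Sum>k. indicator {x. x \<le> (1/2::real)^k} q :: ennreal) = ennreal r" "0 \<le> r"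
      by (cases "(\<Sum>k. indicator {x. x \<le> (1/2::real)^k} q :: ennreal)") auto
    have "ennreal (real (Suc (nat \<lceil>r\<rceil>))) \<le> ennreal r"
      using r Pm by metis
    then have "real (Suc (nat \<lceil>r\<rceil>)) \<le> r" using ennreal_le_iff[OF r(2)] by blast
    then show False by linarith
  qed
  then show ?thesis by simp
next
  case False
  then have q0: "0 < q" using assms by simp
  show ?thesis
  proof (cases "q < 1")
    case False
    then have "neglog q = 0" using q0 by (simp add: neglog_def ennreal_eq_0_iff)
    then show ?thesis by simp
  next
    case True
    define L where "L = - log 2 q"
    have L0: "0 < L" using True q0 by (simp add: L_def)
    define m where "m = nat \<lfloor>L\<rfloor>"
    have mL: "real m \<le> L" "L < real m + 1" using L0 by (auto simp: m_def)
    have "q \<le> (1/2)^k" if "k \<le> m" for k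
    proof -
      have "q = 2 powr (- L)" using q0 by (simp add: L_def)
      also have "\<dots> \<le> 2 powr (- real k)" using mL that by (intro powr_mono) auto
      also have "\<dots> = (1/2)^k" by (simp add: powr_minus powr_realpow power_one_over inverse_eq_divide)
      finally show ?thesis .
    qed
    then have S: "ennreal (real (Suc m)) \<le> (\<Sum>k. indicator {x. x \<le> (1/2::real)^k} q :: ennreal)"
      by (rule partial_le)
    have "- ln q = L * ln 2" using q0 by (simp add: L_def log_def)
    also have "\<dots> \<le> L" using L0 ln_2_less_1 by (simp add: mult_le_cancel_left1)
    also have "\<dots> \<le> real (Suc m)" using mL by simp
    finally have lq: "- ln q \<le> real (Suc m)" .
    have e: "neglog q = ennreal (- ln q)" using q0 by (simp add: neglog_def)
    have "neglog q \<le> ennreal (real (Suc m))" unfolding e by (rule ennreal_leI) (rule lq)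
    then show ?thesis using S by (rule order_trans)
  qed
qed


lemma prob_Sigma: "0 < b \<Longrightarrow> prob_space (Sigma_meas b)"
  unfolding Sigma_meas_def by (intro prob_space_PiM prob_space_uniform_count_measure) auto

lemma prob_base: "0 < b \<Longrightarrow> prob_space (base_meas b)"
  unfolding base_meas_def
  by (intro prob_space_pair prob_Sigma prob_space_restrict_space) auto

lemma mu_finite: "0 < b \<Longrightarrow> emeasure (mu_meas b \<gamma> \<phi>) X \<le> 1"
proof -
  assume b: "0 < b"
  interpret P: prob_space "base_meas b" using prob_base[OF b] .
  show ?thesis
    unfolding mu_meas_def distr_def emeasure_measure_of_conv
    using emeasure_space[of "base_meas b"] P.emeasure_space_1 by auto
qed

lemma space_mu: "space (mu_meas b \<gamma> \<phi>) = space (target_space b)"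
  by (simp add: mu_meas_def)

lemma sets_mu: "sets (mu_meas b \<gamma> \<phi>) = sets (target_space b)"
  by (simp add: mu_meas_def)

lemma space_target_fst: "w \<in> space (target_space b) \<Longrightarrow> fst w 0 < b"
  by (auto simp: target_space_def Sigma_meas_def space_pair_measure space_PiM space_uniform_count_measure)

lemma C_sets: "i < b \<Longrightarrow> {w \<in> space (target_space b). fst w 0 = i} \<in> sets (target_space b)"
proof -
  assume i: "i < b"
  have m: "(\<lambda>w. fst w 0) \<in> measurable (target_space b) (uniform_count_measure {..<b})"
    unfolding target_space_def Sigma_meas_def
    by (rule measurable_compose[OF measurable_fst measurable_component_singleton]) simp
  have "(\<lambda>w. fst w 0) -` {i} \<inter> space (target_space b) \<in> sets (target_space b)"
    using i by (intro measurable_sets[OF m]) (simp add: sets_uniform_count_measure)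
  moreover have "(\<lambda>w. fst w 0) -` {i} \<inter> space (target_space b) = {w \<in> space (target_space b). fst w 0 = i}"
    by auto
  ultimately show ?thesis by simp
qed


lemma neglog_measurable[measurable]: "neglog \<in> borel_measurable borel"
  unfolding neglog_def by measurable

theorem lemma9p3:
  fixes b :: nat and \<gamma> :: real and \<phi> :: "real \<Rightarrow> real"
    and K :: "(nat \<Rightarrow> nat) \<times> real \<times> real \<Rightarrow> ((nat \<Rightarrow> nat) \<times> real \<times> real) measure"
  assumes "b \<ge> 2"
    and "0 < \<gamma>" and "\<gamma> < 1"
    and "\<And>t. \<phi> (t + 1) = \<phi> t"
    and "\<exists>L. L-lipschitz_on UNIV \<phi>"
    and "cond_measure_system (mu_meas b \<gamma> \<phi>) K"
  shows "(\<integral>\<^sup>+ w. g_fun b K w \<partial>completion (mu_meas b \<gamma> \<phi>)) < \<infinity>"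
proof -
  define M where "M = mu_meas b \<gamma> \<phi>"
  define N where "N = completion M"
  define T where "T = target_space b"
  have b0: "0 < b" using assms(1) by simp
  have cms: "cond_measure_system M K" using assms(6) by (simp add: M_def)
  have spM: "space M = space T" by (simp add: M_def T_def space_mu)
  have stM: "sets M = sets T" by (simp add: M_def T_def sets_mu)
  have spN: "space N = space M" by (simp add: N_def)
  define C where "C i = {w \<in> space T. fst w 0 = i}" for i
  define p where "p i w = emeasure (K w) (C i)" for i w
  define h where "h i w = neglog (enn2real (p i w))" for i w
  define B where "B i k = {w \<in> space M. enn2real (p i w) \<le> (1/2::real)^k}" for i k
  have CM: "C i \<in> sets M" if "i < b" for i
    using C_sets[OF that] by (simp add: C_def stM T_def)
  have pm: "p i \<in> borel_measurable N" if "i < b" for i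
    using cms CM[OF that] unfolding cond_measure_system_def p_def N_def by blast
  have hm: "h i \<in> borel_measurable N" if "i < b" for i
    unfolding h_def using pm[OF that] by measurable
  have CN: "C i \<in> sets N" if "i < b" for i using CM[OF that] by (simp add: N_def)
  have BN: "B i k \<in> sets N" if "i < b" for i k
  proof -
    have "{w \<in> space N. enn2real (p i w) \<le> (1/2::real)^k} \<in> sets N"
      using pm[OF that] by measurable
    then show ?thesis by (simp add: B_def spN)
  qed
  have AEp: "AE w in N. p i w \<le> 1" for i
  proof -
    have "AE w in N. prob_space (K w) \<and> sets (K w) = sets M"
      using cms unfolding cond_measure_system_def N_def
      by (intro AE_completion) (auto elim: AE_mp)
    then show ?thesis
      by eventually_elim (auto simp: p_def intro: prob_space.emeasure_le_1)
  qed
  have spaceN1: "emeasure N (space N) \<le> 1"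
    using mu_finite[OF b0, of \<gamma> \<phi> "space M"] by (simp add: N_def M_def)
  have geo: "(\<Sum>k. ennreal ((1/2::real)^k)) = ennreal 2"
    by (rule suminf_ennreal_eq) (use geometric_sums[of "1/2::real"] in auto)
  have Ci: "(\<integral>\<^sup>+ w. indicator (C i) w * h i w \<partial>N) \<le> ennreal 2" if i: "i < b" for i
  proof -
    have "(\<integral>\<^sup>+ w. indicator (C i) w * h i w \<partial>N) \<le> (\<integral>\<^sup>+ w. (\<Sum>k. indicator (C i \<inter> B i k) w) \<partial>N)"
    proof (rule nn_integral_mono)
      fix w assume w: "w \<in> space N"
      show "indicator (C i) w * h i w \<le> (\<Sum>k. indicator (C i \<inter> B i k) w)"
      proof (cases "w \<in> C i")
        case True
        have "indicator (C i \<inter> B i k) w = (indicator {x. x \<le> (1/2::real)^k} (enn2real (p i w)) :: ennreal)" for k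
          using True w spN by (auto simp: B_def indicator_def)
        then show ?thesis using True neglog_bound[of "enn2real (p i w)"] by (simp add: h_def)
      qed simp
    qed
    also have "\<dots> = (\<Sum>k. emeasure N (C i \<inter> B i k))"
      using CN[OF i] BN[OF i] by (subst nn_integral_suminf) auto
    also have "\<dots> = (\<Sum>k. \<integral>\<^sup>+ w. indicator (B i k) w * p i w \<partial>N)"
    proof (rule suminf_cong)
      fix k
      show "emeasure N (C i \<inter> B i k) = (\<integral>\<^sup>+ w. indicator (B i k) w * p i w \<partial>N)"
        unfolding N_def p_def
      proof (rule set_lemma[OF cms CM[OF i]])
        show "B i k \<in> sets (completion M)" using BN[OF i] by (simp add: N_def)
        show "B i k \<subseteq> space M" by (auto simp: B_def)
        fix w w' assume "w \<in> B i k" "w' \<in> space M" "snd w' = snd w"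
        moreover have "K w' = K w" using cms \<open>snd w' = snd w\<close> unfolding cond_measure_system_def by blast
        ultimately show "w' \<in> B i k" by (simp add: B_def p_def)
      qed
    qed
    also have "\<dots> \<le> (\<Sum>k. ennreal ((1/2::real)^k))"
    proof (rule suminf_le)
      fix k
      have "(\<integral>\<^sup>+ w. indicator (B i k) w * p i w \<partial>N) \<le> (\<integral>\<^sup>+ w. ennreal ((1/2::real)^k) * indicator (space N) w \<partial>N)"
      proof (rule nn_integral_mono_AE)
        show "AE w in N. indicator (B i k) w * p i w \<le> ennreal ((1/2::real)^k) * indicator (space N) w"
          using AEp[of i] AE_space
        proof eventually_elim
          case (elim w)
          then have pe: "p i w = ennreal (enn2real (p i w))"
            by (simp add: ennreal_enn2real_if) (metis ennreal_one_neq_top neq_top_trans)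
          show ?case
          proof (cases "w \<in> B i k")
            case True
            then have "enn2real (p i w) \<le> (1/2)^k" by (simp add: B_def)
            then have "ennreal (enn2real (p i w)) \<le> ennreal ((1/2)^k)" by (rule ennreal_leI)
            then have "p i w \<le> ennreal ((1/2)^k)" using pe by simp
            then show ?thesis using True elim by (simp add: indicator_def)
          qed simp
        qed
      qed
      also have "\<dots> = ennreal ((1/2::real)^k) * emeasure N (space N)"
        by (simp add: nn_integral_cmult_indicator)
      also have "\<dots> \<le> ennreal ((1/2::real)^k)"
        using spaceN1 mult_left_mono[OF spaceN1, of "ennreal ((1/2::real)^k)"] by simp
      finally show "(\<integral>\<^sup>+ w. indicator (B i k) w * p i w \<partial>N) \<le> ennreal ((1/2::real)^k)" .
    qed auto
    also have "\<dots> = ennreal 2" by (rule geo)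
    finally show ?thesis .
  qed
  have "(\<integral>\<^sup>+ w. g_fun b K w \<partial>N) \<le> (\<integral>\<^sup>+ w. (\<Sum>i<b. indicator (C i) w * h i w) \<partial>N)"
  proof (rule nn_integral_mono)
    fix w assume w: "w \<in> space N"
    then have wT: "w \<in> space T" using spN spM by simp
    define i where "i = fst w 0"
    have ib: "i < b" using space_target_fst[of w b] wT by (simp add: i_def T_def)
    have "g_fun b K w = indicator (C i) w * h i w"
      using wT by (simp add: g_fun_def h_def p_def C_def i_def T_def measure_def indicator_def)
    also have "\<dots> \<le> (\<Sum>i<b. indicator (C i) w * h i w)"
      by (rule member_le_sum) (use ib in auto)
    finally show "g_fun b K w \<le> (\<Sum>i<b. indicator (C i) w * h i w)" .
  qed
  also have "\<dots> = (\<Sum>i<b. \<integral>\<^sup>+ w. indicator (C i) w * h i w \<partial>N)"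
    using CN hm by (intro nn_integral_sum) auto
  also have "\<dots> \<le> (\<Sum>i<b. ennreal 2)"
    using Ci by (intro sum_mono) auto
  also have "\<dots> < \<infinity>" by (simp add: ennreal_mult_less_top ennreal_of_nat_eq_real_of_nat)
  finally show ?thesis by (simp add: N_def M_def)
qed

end
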